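(* Let $n\geq 2$ and number the crossings of the $n$-foil $1,\dots,n$ in any fixed order. The set of words of the states of the $n$-foil consisting of exactly two closed curves is \[ \mathcal{F}_n=\left\{1^p01^k01^{n-p-k-2}\;\middle|\; 0\leq p\leq n-2,\ 0\leq k\leq n-p-2\right\}\cup\left\{1^n\right\}. \]
   Context: A (shadow) diagram is a finite collection of closed curves in the plane in general position whose only singularities are finitely many transverse double points, called crossings; over/under information is ignored. At a crossing four corners of complementary regions meet, forming two pairs of opposite corners. Splitting a crossing replaces a small neighbourhood of it by two disjoint arcs in one of two ways, each merging one pair of opposite corners into a channel. A state is the result of choosing a split at every crossing; it is a disjoint union of simple closed curves. The $n$-foil ($n\geq 2$) is drawn as the closure of a $2$-strand braid with $n$ crossings: two strands run once around a central point and cross each other $n$ times (the standard diagram of the $(2,n)$ torus knot or link, e.g. the trefoil for $n=3$, two overlapping circles for $n=2$). Its complementary regions are the unbounded region, a central region, and $n$ bigons; at each crossing the central and unbounded regions occupy one pair of opposite corners and two bigons occupy the other pair. The $A$-split at a crossing is the split merging the corners of the central and unbounded regions; the $B$-split merges the two bigon corners. With crossings numbered $1,\dots,n$, a state is recorded by the binary word whose $i$-th letter is $0$ if an $A$-split is applied at crossing $i$ and $1$ if a $B$-split is applied. Notation: $\sigma^k$ denotes $k$ consecutive copies of the letter $\sigma$ (empty if $k\leq 0$), words are concatenated. *)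

theory Defs
  imports Main
begin

text \<open>Combinatorial model of the n-foil (closure of the 2-braid with n crossings).
Crossings are 0,...,n-1 in cyclic order around the centre; between crossing i and
crossing (i+1) mod n lies a bigon bounded by an inner strand segment (facing the
central region) and an outer strand segment (facing the unbounded region).
At crossing i the four half-edges are (i, side, level) with side Lft (towards the
bigon between i-1 and i) or Rgt (towards the bigon between i and i+1) and level
Inn or Outr.  Corners at crossing i: central corner between (i,Lft,Inn),(i,Rgt,Inn);
unbounded corner between (i,Lft,Outr),(i,Rgt,Outr); bigon corners between
(i,Lft,Inn),(i,Lft,Outr) and between (i,Rgt,Inn),(i,Rgt,Outr).\<close>

datatype side = Lft | Rgt
datatype level = Inn | Outr
datatype split = A_split | B_split

type_synonym endpoint = "nat \<times> side \<times> level"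

definition foil_ends :: "nat \<Rightarrow> endpoint set" where
  "foil_ends n = {0..<n} \<times> UNIV \<times> UNIV"

definition foil_segments :: "nat \<Rightarrow> (endpoint \<times> endpoint) set" where
  "foil_segments n = {((i, Rgt, l), (Suc i mod n, Lft, l)) | i l. i < n}"

text \<open>The A-split merges the central and unbounded
corners, so its two arcs run around the two bigon corners; the B-split merges the
two bigon corners, so its two arcs run around the central and unbounded corners.\<close>
definition split_arcs :: "nat \<Rightarrow> (nat \<Rightarrow> split) \<Rightarrow> (endpoint \<times> endpoint) set" where
  "split_arcs n s =
     {((i, Lft, l), (i, Rgt, l)) | i l. i < n \<and> s i = B_split}
   \<union> {((i, sd, Inn), (i, sd, Outr)) | i sd. i < n \<and> s i = A_split}"

definition state_rel :: "nat \<Rightarrow> (nat \<Rightarrow> split) \<Rightarrow> endpoint rel" where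
  "state_rel n s = (let E = foil_segments n \<union> split_arcs n s in (E \<union> E\<inverse>)\<^sup>*)"

definition num_curves :: "nat \<Rightarrow> (nat \<Rightarrow> split) \<Rightarrow> nat" where
  "num_curves n s = card (foil_ends n // state_rel n s)"

definition state_of_word :: "(nat \<Rightarrow> nat) \<Rightarrow> nat list \<Rightarrow> nat \<Rightarrow> split" where
  "state_of_word \<pi> w c = (if w ! \<pi> c = 0 then A_split else B_split)"

end

theory Submission
  imports Defs
begin

definition Aset :: "nat \<Rightarrow> (nat \<Rightarrow> split) \<Rightarrow> nat set" where
  "Aset n s = {j. j < n \<and> s j = A_split}"

definition prevA :: "nat \<Rightarrow> (nat \<Rightarrow> split) \<Rightarrow> nat \<Rightarrow> nat" where
  "prevA n s i = (if \<exists>j\<le>i. s j = A_split then Max {j. j \<le> i \<and> s j = A_split} else Max (Aset n s))"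

definition predc :: "nat \<Rightarrow> nat \<Rightarrow> nat" where
  "predc n i = (i + n - 1) mod n"

fun lab :: "nat \<Rightarrow> (nat \<Rightarrow> split) \<Rightarrow> endpoint \<Rightarrow> nat" where
  "lab n s (i, sd, l) = (if Aset n s = {} then (case l of Inn \<Rightarrow> 0 | Outr \<Rightarrow> 1)
      else (case sd of Rgt \<Rightarrow> prevA n s i | Lft \<Rightarrow> prevA n s (predc n i)))"

lemma split_B: "s \<noteq> A_split \<Longrightarrow> s = B_split"
  by (cases s) auto

lemma fin_le: "finite {j::nat. j \<le> i \<and> P j}"
  by (rule finite_subset[of _ "{..i}"]) auto

lemma prevA_in:
  assumes "i < n" "Aset n s \<noteq> {}"
  shows "prevA n s i \<in> Aset n s"
proof (cases "\<exists>j\<le>i. s j = A_split")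
  case True
  then have ne: "{j. j \<le> i \<and> s j = A_split} \<noteq> {}" by auto
  have "Max {j. j \<le> i \<and> s j = A_split} \<in> {j. j \<le> i \<and> s j = A_split}"
    using Max_in[OF fin_le ne] .
  then show ?thesis using True assms unfolding prevA_def Aset_def by auto
next
  case False
  have fin: "finite (Aset n s)" unfolding Aset_def by auto
  show ?thesis using False Max_in[OF fin assms(2)] unfolding prevA_def by auto
qed

lemma prevA_A:
  assumes "s i = A_split"
  shows "prevA n s i = i"
proof -
  have "Max {j. j \<le> i \<and> s j = A_split} = i"
    by (rule Max_eqI[OF fin_le]) (use assms in auto)
  then show ?thesis using assms unfolding prevA_def by auto
qed

lemma prevA_B:
  assumes "0 < i" "s i = B_split"
  shows "prevA n s i = prevA n s (i - 1)"
proof -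
  have eq: "{j. j \<le> i \<and> s j = A_split} = {j. j \<le> i - 1 \<and> s j = A_split}"
    using assms by (auto simp: le_Suc_eq) (metis One_nat_def Suc_pred le_SucE split.distinct(1))
  have ex: "(\<exists>j\<le>i. s j = A_split) = (\<exists>j\<le>i - 1. s j = A_split)"
    using eq by blast
  show ?thesis unfolding prevA_def using eq ex by auto
qed

lemma prevA_0:
  assumes "0 < n" "s 0 = B_split"
  shows "prevA n s 0 = prevA n s (n - 1)"
proof (cases "\<exists>j\<le>n-1. s j = A_split")
  case True
  have eq: "{j. j \<le> n - 1 \<and> s j = A_split} = Aset n s" using assms unfolding Aset_def by auto
  have "\<not> (\<exists>j\<le>0. s j = A_split)" using assms by auto
  then show ?thesis using True eq unfolding prevA_def by simp
next
  case False
  have "\<not> (\<exists>j\<le>0. s j = A_split)" using assms by auto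
  then show ?thesis using False unfolding prevA_def by auto
qed

lemma predc_lt: "0 < n \<Longrightarrow> predc n i < n"
  unfolding predc_def by simp

lemma predc_Suc: "i < n \<Longrightarrow> predc n (Suc i mod n) = i"
proof (cases "Suc i < n")
  case True
  assume "i < n"
  then show ?thesis using True unfolding predc_def by simp
next
  case False
  assume "i < n"
  then have "Suc i = n" using False by simp
  then show ?thesis unfolding predc_def by simp
qed

lemma Suc_predc: "i < n \<Longrightarrow> Suc (predc n i) mod n = i"
proof (cases i)
  case 0
  assume "i < n"
  then show ?thesis using 0 unfolding predc_def by (cases n) auto
next
  case (Suc m)
  assume "i < n"
  then show ?thesis using Suc unfolding predc_def by simp
qed

lemma predc_pos: "0 < i \<Longrightarrow> i < n \<Longrightarrow> predc n i = i - 1"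
proof -
  assume a: "0 < i" "i < n"
  then have "i + n - 1 = (i - 1) + n" by simp
  then have "(i + n - 1) mod n = ((i - 1) + n) mod n" by simp
  also have "\<dots> = (i - 1) mod n" by (rule mod_add_self2)
  also have "\<dots> = i - 1" using a by (simp add: mod_less)
  finally show ?thesis unfolding predc_def .
qed

lemma predc_zero: "0 < n \<Longrightarrow> predc n 0 = n - 1"
  unfolding predc_def by simp

lemma prevA_predc_B:
  assumes "0 < n" "i < n" "s i = B_split"
  shows "prevA n s (predc n i) = prevA n s i"
proof (cases "i = 0")
  case True
  then show ?thesis using assms prevA_0[of n s] predc_zero[of n] by simp
next
  case False
  then show ?thesis using assms prevA_B[of i s n] predc_pos[of i n] by simp
qed

lemma edge_ok:
  assumes n: "0 < n" and e: "(x, y) \<in> foil_segments n \<union> split_arcs n s"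
  shows "x \<in> foil_ends n \<and> y \<in> foil_ends n \<and> lab n s x = lab n s y"
  using e
proof
  assume "(x, y) \<in> foil_segments n"
  then obtain i l where xy: "x = (i, Rgt, l)" "y = (Suc i mod n, Lft, l)" "i < n"
    unfolding foil_segments_def by blast
  show ?thesis using xy n predc_Suc[of i n] unfolding foil_ends_def by auto
next
  assume "(x, y) \<in> split_arcs n s"
  then consider (B) i l where "x = (i, Lft, l)" "y = (i, Rgt, l)" "i < n" "s i = B_split"
    | (A) i sd where "x = (i, sd, Inn)" "y = (i, sd, Outr)" "i < n" "s i = A_split"
    unfolding split_arcs_def by blast
  then show ?thesis
  proof cases
    case B
    then show ?thesis using n prevA_predc_B[of n i s] unfolding foil_ends_def by auto
  next
    case A
    then have "Aset n s \<noteq> {}" unfolding Aset_def by auto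
    then show ?thesis using A unfolding foil_ends_def by (cases sd) auto
  qed
qed

definition E_of :: "nat \<Rightarrow> (nat \<Rightarrow> split) \<Rightarrow> (endpoint \<times> endpoint) set" where
  "E_of n s = foil_segments n \<union> split_arcs n s"

lemma state_rel_E: "state_rel n s = (E_of n s \<union> (E_of n s)\<inverse>)\<^sup>*"
  unfolding state_rel_def E_of_def Let_def by simp

lemma rel_sound:
  assumes n: "0 < n" and r: "(x, y) \<in> state_rel n s"
  shows "x = y \<or> (x \<in> foil_ends n \<and> y \<in> foil_ends n \<and> lab n s x = lab n s y)"
  using r unfolding state_rel_E
proof (induction rule: rtrancl_induct)
  case base
  then show ?case by simp
next
  case (step y z)
  have "y \<in> foil_ends n \<and> z \<in> foil_ends n \<and> lab n s y = lab n s z"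
    using step(2) edge_ok[OF n, of y z s] edge_ok[OF n, of z y s] unfolding E_of_def by auto
  then show ?case using step(3) by auto
qed

lemma E_in: "e \<in> E_of n s \<Longrightarrow> e \<in> state_rel n s"
  unfolding state_rel_E by auto

lemma E_in': "(x, y) \<in> E_of n s \<Longrightarrow> (y, x) \<in> state_rel n s"
  unfolding state_rel_E by auto

lemma rel_trans: "(x, y) \<in> state_rel n s \<Longrightarrow> (y, z) \<in> state_rel n s \<Longrightarrow> (x, z) \<in> state_rel n s"
  unfolding state_rel_E by (rule rtrancl_trans)

lemma rel_sym: "(x, y) \<in> state_rel n s \<Longrightarrow> (y, x) \<in> state_rel n s"
  unfolding state_rel_E by (metis converse_Un converse_converse rtrancl_converseI sup_commute)

lemma seg_back:
  assumes "0 < i" "i < n"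
  shows "((i, Lft, l), (i - 1, Rgt, l)) \<in> state_rel n s"
proof -
  have "((i - 1, Rgt, l), (Suc (i - 1) mod n, Lft, l)) \<in> E_of n s"
    unfolding E_of_def foil_segments_def using assms by auto
  then show ?thesis using E_in' assms by fastforce
qed

lemma seg_back0:
  assumes "0 < n"
  shows "((0, Lft, l), (n - 1, Rgt, l)) \<in> state_rel n s"
proof -
  have "((n - 1, Rgt, l), (Suc (n - 1) mod n, Lft, l)) \<in> E_of n s"
    unfolding E_of_def foil_segments_def using assms by auto
  then show ?thesis using E_in' assms by fastforce
qed

lemma seg_pred:
  assumes "0 < n" "i < n"
  shows "((i, Lft, l), (predc n i, Rgt, l)) \<in> state_rel n s"
proof -
  have "((predc n i, Rgt, l), (Suc (predc n i) mod n, Lft, l)) \<in> E_of n s"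
    unfolding E_of_def foil_segments_def using assms predc_lt by auto
  then show ?thesis using E_in' assms Suc_predc[of i n] by fastforce
qed

lemma B_arc:
  assumes "i < n" "s i = B_split"
  shows "((i, Rgt, l), (i, Lft, l)) \<in> state_rel n s"
proof -
  have "((i, Lft, l), (i, Rgt, l)) \<in> E_of n s"
    unfolding E_of_def split_arcs_def using assms by auto
  then show ?thesis using E_in' by fastforce
qed

lemma A_arc:
  assumes "i < n" "s i = A_split"
  shows "((i, Rgt, l), (i, Rgt, Inn)) \<in> state_rel n s"
proof (cases l)
  case Inn
  then show ?thesis unfolding state_rel_E by simp
next
  case Outr
  have "((i, Rgt, Inn), (i, Rgt, Outr)) \<in> E_of n s"
    unfolding E_of_def split_arcs_def using assms by auto
  then show ?thesis using E_in' Outr by fastforce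
qed

lemma conn1:
  assumes "i < n" "\<exists>j\<le>i. s j = A_split"
  shows "((i, Rgt, l), (prevA n s i, Rgt, l)) \<in> state_rel n s"
  using assms
proof (induction i)
  case 0
  then have "s 0 = A_split" by auto
  then show ?case using prevA_A[of s 0 n] unfolding state_rel_E by simp
next
  case (Suc i)
  show ?case
  proof (cases "s (Suc i) = A_split")
    case True
    then show ?thesis using prevA_A[of s "Suc i" n] unfolding state_rel_E by simp
  next
    case False
    then have B: "s (Suc i) = B_split" by (rule split_B)
    then have ex: "\<exists>j\<le>i. s j = A_split" using Suc.prems(2) by (metis le_SucE split.distinct(1))
    have "((i, Rgt, l), (prevA n s i, Rgt, l)) \<in> state_rel n s" using Suc.IH Suc.prems ex by simp
    moreover have "((Suc i, Rgt, l), (i, Rgt, l)) \<in> state_rel n s"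
    proof -
      have sb: "((Suc i, Lft, l), (Suc i - 1, Rgt, l)) \<in> state_rel n s"
        using seg_back[of "Suc i" n l s] Suc.prems by simp
      show ?thesis using rel_trans[OF B_arc[of "Suc i" n s l, OF Suc.prems(1) B] sb] by simp
    qed
    moreover have "prevA n s (Suc i) = prevA n s i" using prevA_B[of "Suc i" s n] B by simp
    ultimately show ?thesis using rel_trans[of "(Suc i, Rgt, l)" "(i, Rgt, l)"] by simp
  qed
qed

lemma conn2:
  assumes "i < n" "\<not> (\<exists>j\<le>i. s j = A_split)" "Aset n s \<noteq> {}"
  shows "((i, Rgt, l), (prevA n s i, Rgt, l)) \<in> state_rel n s"
  using assms
proof (induction i)
  case 0
  then have B: "s 0 = B_split" using split_B by auto
  have n: "0 < n" using 0 by simp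
  obtain a where a: "a < n" "s a = A_split" using 0(3) unfolding Aset_def by auto
  have ex: "\<exists>j\<le>n - 1. s j = A_split" using a by (intro exI[of _ a]) simp
  have "((n - 1, Rgt, l), (prevA n s (n - 1), Rgt, l)) \<in> state_rel n s"
    using conn1[OF _ ex] n by simp
  moreover have "((0, Rgt, l), (n - 1, Rgt, l)) \<in> state_rel n s"
    using rel_trans[OF B_arc[of 0 n s l, OF n B] seg_back0[OF n]] by simp
  moreover have "prevA n s 0 = prevA n s (n - 1)" using prevA_0[of n s, OF n B] .
  ultimately show ?case using rel_trans[of "(0, Rgt, l)" "(n - 1, Rgt, l)"] by simp
next
  case (Suc i)
  then have B: "s (Suc i) = B_split" using split_B by auto
  have "((i, Rgt, l), (prevA n s i, Rgt, l)) \<in> state_rel n s" using Suc by auto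
  moreover have "((Suc i, Rgt, l), (i, Rgt, l)) \<in> state_rel n s"
  proof -
    have sb: "((Suc i, Lft, l), (Suc i - 1, Rgt, l)) \<in> state_rel n s"
      using seg_back[of "Suc i" n l s] Suc.prems by simp
    show ?thesis using rel_trans[OF B_arc[of "Suc i" n s l, OF Suc.prems(1) B] sb] by simp
  qed
  moreover have "prevA n s (Suc i) = prevA n s i" using prevA_B[of "Suc i" s n] B by simp
  ultimately show ?case using rel_trans[of "(Suc i, Rgt, l)" "(i, Rgt, l)"] by simp
qed

lemma conn3:
  assumes "i < n" "Aset n s = {}"
  shows "((i, Rgt, l), (0, Rgt, l)) \<in> state_rel n s"
  using assms
proof (induction i)
  case 0
  then show ?case unfolding state_rel_E by simp
next
  case (Suc i)
  then have B: "s (Suc i) = B_split" using split_B unfolding Aset_def by auto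
  have "((i, Rgt, l), (0, Rgt, l)) \<in> state_rel n s" using Suc by auto
  moreover have "((Suc i, Rgt, l), (i, Rgt, l)) \<in> state_rel n s"
  proof -
    have sb: "((Suc i, Lft, l), (Suc i - 1, Rgt, l)) \<in> state_rel n s"
      using seg_back[of "Suc i" n l s] Suc.prems by simp
    show ?thesis using rel_trans[OF B_arc[of "Suc i" n s l, OF Suc.prems(1) B] sb] by simp
  qed
  ultimately show ?case using rel_trans[of "(Suc i, Rgt, l)" "(i, Rgt, l)"] by simp
qed

definition rep :: "nat \<Rightarrow> (nat \<Rightarrow> split) \<Rightarrow> endpoint \<Rightarrow> endpoint" where
  "rep n s x = (if Aset n s = {} then (0, Rgt, snd (snd x)) else (lab n s x, Rgt, Inn))"

lemma conn_rgt:
  assumes "i < n"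
  shows "((i, Rgt, l), rep n s (i, Rgt, l)) \<in> state_rel n s"
proof (cases "Aset n s = {}")
  case True
  then show ?thesis using conn3[OF assms True] unfolding rep_def by simp
next
  case False
  have 1: "((i, Rgt, l), (prevA n s i, Rgt, l)) \<in> state_rel n s"
    using conn1[OF assms] conn2[OF assms _ False] by blast
  have "prevA n s i \<in> Aset n s" using prevA_in[OF assms False] .
  then have 2: "((prevA n s i, Rgt, l), (prevA n s i, Rgt, Inn)) \<in> state_rel n s"
    using A_arc unfolding Aset_def by auto
  show ?thesis using rel_trans[OF 1 2] False unfolding rep_def by simp
qed

lemma conn_all:
  assumes n: "0 < n" and x: "x \<in> foil_ends n"
  shows "(x, rep n s x) \<in> state_rel n s"
proof -
  obtain i sd l where xx: "x = (i, sd, l)" "i < n" using x unfolding foil_ends_def by auto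
  show ?thesis
  proof (cases sd)
    case Rgt
    then show ?thesis using conn_rgt xx by simp
  next
    case Lft
    have 1: "(x, (predc n i, Rgt, l)) \<in> state_rel n s" using seg_pred[OF n xx(2)] xx Lft by simp
    have 2: "((predc n i, Rgt, l), rep n s (predc n i, Rgt, l)) \<in> state_rel n s"
      using conn_rgt predc_lt[OF n] by blast
    have "rep n s (predc n i, Rgt, l) = rep n s x"
      unfolding rep_def using xx Lft by simp
    then show ?thesis using rel_trans[OF 1 2] by simp
  qed
qed

lemma rep_eq:
  assumes "lab n s x = lab n s y"
  shows "rep n s x = rep n s y"
proof (cases "Aset n s = {}")
  case True
  obtain i sd l where "x = (i, sd, l)" by (cases x) auto
  moreover obtain i' sd' l' where "y = (i', sd', l')" by (cases y) auto
  ultimately show ?thesis using assms True unfolding rep_def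
    by (cases l; cases l') auto
next
  case False
  then show ?thesis using assms unfolding rep_def by simp
qed

lemma classes:
  assumes n: "0 < n" and x: "x \<in> foil_ends n"
  shows "state_rel n s `` {x} = {y \<in> foil_ends n. lab n s y = lab n s x}"
proof
  show "state_rel n s `` {x} \<subseteq> {y \<in> foil_ends n. lab n s y = lab n s x}"
  proof
    fix y assume "y \<in> state_rel n s `` {x}"
    then have "(x, y) \<in> state_rel n s" by simp
    then have "x = y \<or> (x \<in> foil_ends n \<and> y \<in> foil_ends n \<and> lab n s x = lab n s y)"
      by (rule rel_sound[OF n])
    then show "y \<in> {y \<in> foil_ends n. lab n s y = lab n s x}" using x by auto
  qed
next
  show "{y \<in> foil_ends n. lab n s y = lab n s x} \<subseteq> state_rel n s `` {x}"
  proof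
    fix y assume y: "y \<in> {y \<in> foil_ends n. lab n s y = lab n s x}"
    have r1: "(x, rep n s x) \<in> state_rel n s" using conn_all[OF n x] .
    have ye: "y \<in> foil_ends n" and yl: "lab n s y = lab n s x" using y by blast+
    have r2: "(y, rep n s y) \<in> state_rel n s" using conn_all[OF n ye] .
    have r3: "rep n s y = rep n s x" by (rule rep_eq[OF yl])
    have "(x, y) \<in> state_rel n s" using rel_trans[OF r1 rel_sym[OF r2[unfolded r3]]] .
    then show "y \<in> state_rel n s `` {x}" by simp
  qed
qed

lemma card_quot:
  assumes "\<And>x. x \<in> A \<Longrightarrow> R `` {x} = {y \<in> A. f y = f x}"
  shows "card (A // R) = card (f ` A)"
proof -
  have "A // R = (\<lambda>x. R `` {x}) ` A" unfolding quotient_def by blast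
  also have "\<dots> = (\<lambda>x. {y \<in> A. f y = f x}) ` A" by (rule image_cong[OF refl assms])
  also have "\<dots> = (\<lambda>v. {y \<in> A. f y = v}) ` (f ` A)" by (simp only: image_image)
  finally have eq: "A // R = (\<lambda>v. {y \<in> A. f y = v}) ` (f ` A)" .
  have inj: "inj_on (\<lambda>v. {y \<in> A. f y = v}) (f ` A)"
    by (rule inj_onI) blast
  show ?thesis unfolding eq by (rule card_image[OF inj])
qed

lemma lab_image:
  assumes n: "0 < n"
  shows "lab n s ` foil_ends n = (if Aset n s = {} then {0, 1} else Aset n s)"
proof (cases "Aset n s = {}")
  case True
  have "(0, Rgt, Inn) \<in> foil_ends n" "(0, Rgt, Outr) \<in> foil_ends n"
    using n unfolding foil_ends_def by auto
  then have "lab n s (0, Rgt, Inn) \<in> lab n s ` foil_ends n" "lab n s (0, Rgt, Outr) \<in> lab n s ` foil_ends n"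
    by blast+
  moreover have "lab n s ` foil_ends n \<subseteq> {0, 1}"
  proof
    fix v assume "v \<in> lab n s ` foil_ends n"
    then obtain i sd l where "v = lab n s (i, sd, l)" by auto
    then show "v \<in> {0, 1}" using True by (cases l) auto
  qed
  ultimately show ?thesis using True by auto
next
  case False
  have "lab n s ` foil_ends n \<subseteq> Aset n s"
  proof
    fix v assume "v \<in> lab n s ` foil_ends n"
    then obtain i sd l where v: "v = lab n s (i, sd, l)" "i < n" unfolding foil_ends_def by auto
    then show "v \<in> Aset n s" using False prevA_in[OF _ False] predc_lt[OF n]
      by (cases sd) auto
  qed
  moreover have "Aset n s \<subseteq> lab n s ` foil_ends n"
  proof
    fix a assume a: "a \<in> Aset n s"
    then have sa: "s a = A_split" unfolding Aset_def by auto
    have "lab n s (a, Rgt, Inn) = a" by (simp add: False prevA_A[of s a n, OF sa])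
    moreover have "(a, Rgt, Inn) \<in> foil_ends n" using a unfolding foil_ends_def Aset_def by auto
    ultimately show "a \<in> lab n s ` foil_ends n" by force
  qed
  ultimately show ?thesis using False by auto
qed

lemma num_curves_eq:
  assumes n: "0 < n"
  shows "num_curves n s = (if Aset n s = {} then 2 else card (Aset n s))"
proof -
  have "num_curves n s = card (lab n s ` foil_ends n)"
    unfolding num_curves_def by (rule card_quot) (rule classes[OF n])
  then show ?thesis using lab_image[OF n] by simp
qed

lemma no0: "set w \<subseteq> {0::nat, 1} \<Longrightarrow> 0 \<notin> set w \<Longrightarrow> w = replicate (length w) 1"
  by (metis (no_types, lifting) insertE replicate_length_same singletonD subset_iff)

lemma nf: "(filter (\<lambda>x. x = (0::nat)) w = []) = (0 \<notin> set w)"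
  by (induction w) auto

lemma cnt0: "set w \<subseteq> {0::nat, 1} \<Longrightarrow> (length (filter (\<lambda>x. x = 0) w) = 0) = (w = replicate (length w) 1)"
proof
  assume "set w \<subseteq> {0::nat, 1}" "length (filter (\<lambda>x. x = 0) w) = 0"
  moreover have "0 \<notin> set w" using calculation(2) nf by simp
  ultimately show "w = replicate (length w) 1" using no0 by blast
next
  assume h: "w = replicate (length w) 1"
  show "length (filter (\<lambda>x. x = 0) w) = 0"
    using arg_cong[OF h, of "\<lambda>v. length (filter (\<lambda>x. x = (0::nat)) v)"] by simp
qed

lemma cnt2:
  assumes n: "2 \<le> n"
  shows "(w \<in> {replicate p 1 @ [0::nat] @ replicate k 1 @ [0] @ replicate (n - p - k - 2) 1 | p k.
            p \<le> n - 2 \<and> k \<le> n - p - 2})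
    = (length w = n \<and> set w \<subseteq> {0, 1} \<and> length (filter (\<lambda>x. x = 0) w) = 2)"
proof
  assume "w \<in> {replicate p 1 @ [0::nat] @ replicate k 1 @ [0] @ replicate (n - p - k - 2) 1 | p k.
            p \<le> n - 2 \<and> k \<le> n - p - 2}"
  then obtain p k where w: "w = replicate p 1 @ [0::nat] @ replicate k 1 @ [0] @ replicate (n - p - k - 2) 1"
    and pk: "p \<le> n - 2" "k \<le> n - p - 2" by blast
  have "length w = n" using w pk n by simp
  moreover have "set w \<subseteq> {0, 1}" using w by auto
  moreover have "length (filter (\<lambda>x. x = 0) w) = 2" using w by simp
  ultimately show "length w = n \<and> set w \<subseteq> {0, 1} \<and> length (filter (\<lambda>x. x = 0) w) = 2" by blast
next
  assume a: "length w = n \<and> set w \<subseteq> {0, 1} \<and> length (filter (\<lambda>x. x = 0) w) = 2"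
  then have "filter (\<lambda>x. x = 0) w \<noteq> []" by auto
  then have "0 \<in> set w" using nf by simp
  from split_list_first[OF this] obtain ys zs where w: "w = ys @ 0 # zs" and ys: "0 \<notin> set ys" by blast
  have fy: "filter (\<lambda>x. x = 0) ys = []" using ys nf by simp
  have f1: "length (filter (\<lambda>x. x = 0) zs) = 1" using a w fy by simp
  then have "filter (\<lambda>x. x = 0) zs \<noteq> []" by auto
  then have "0 \<in> set zs" using nf by simp
  from split_list_first[OF this] obtain us vs where z: "zs = us @ 0 # vs" and us: "0 \<notin> set us" by blast
  have fu: "filter (\<lambda>x. x = 0) us = []" using us nf by simp
  have "filter (\<lambda>x. x = 0) vs = []" using f1 z fu by simp
  then have vs: "0 \<notin> set vs" using nf by simp
  have s: "set ys \<subseteq> {0,1}" "set us \<subseteq> {0,1}" "set vs \<subseteq> {0,1}" using a w z by auto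
  obtain a where ea: "ys = replicate a (1::nat)" using no0[OF s(1) ys] by blast
  obtain b where eb: "us = replicate b (1::nat)" using no0[OF s(2) us] by blast
  obtain c where ec: "vs = replicate c (1::nat)" using no0[OF s(3) vs] by blast
  have len: "a + b + c + 2 = n" using a w z ea eb ec by simp
  have cc: "c = n - a - b - 2" using len by simp
  have "w = replicate a 1 @ [0::nat] @ replicate b 1 @ [0] @ replicate (n - a - b - 2) 1"
    using w z ea eb ec cc by simp
  moreover have "a \<le> n - 2" "b \<le> n - a - 2" using len by auto
  ultimately show "w \<in> {replicate p 1 @ [0::nat] @ replicate k 1 @ [0] @ replicate (n - p - k - 2) 1 | p k.
            p \<le> n - 2 \<and> k \<le> n - p - 2}"
    unfolding mem_Collect_eq by (intro exI[of _ a] exI[of _ b] conjI)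
qed

lemma card_Aset:
  assumes bij: "bij_betw \<pi> {0..<n} {0..<n}" and len: "length w = n"
  shows "card (Aset n (state_of_word \<pi> w)) = length (filter (\<lambda>x. x = (0::nat)) w)"
proof -
  have A: "Aset n (state_of_word \<pi> w) = {c. c < n \<and> w ! (\<pi> c) = 0}"
    unfolding Aset_def state_of_word_def by auto
  have sub: "{c. c < n \<and> w ! (\<pi> c) = 0} \<subseteq> {0..<n}" by auto
  have inj: "inj_on \<pi> {c. c < n \<and> w ! (\<pi> c) = 0}"
    using bij_betw_imp_inj_on[OF bij] inj_on_subset[OF _ sub] by blast
  have img: "\<pi> ` {c. c < n \<and> w ! (\<pi> c) = 0} = {i. i < n \<and> w ! i = 0}"
  proof
    show "\<pi> ` {c. c < n \<and> w ! (\<pi> c) = 0} \<subseteq> {i. i < n \<and> w ! i = 0}"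
      using bij_betw_imp_surj_on[OF bij] by auto
  next
    show "{i. i < n \<and> w ! i = 0} \<subseteq> \<pi> ` {c. c < n \<and> w ! (\<pi> c) = 0}"
    proof
      fix i assume i: "i \<in> {i. i < n \<and> w ! i = 0}"
      then have "i \<in> \<pi> ` {0..<n}" using bij_betw_imp_surj_on[OF bij] by auto
      then obtain c where "c < n" "i = \<pi> c" by auto
      then show "i \<in> \<pi> ` {c. c < n \<and> w ! (\<pi> c) = 0}" using i by auto
    qed
  qed
  have "card (Aset n (state_of_word \<pi> w)) = card {i. i < n \<and> w ! i = 0}"
    using A card_image[OF inj] img by simp
  also have "\<dots> = length (filter (\<lambda>x. x = (0::nat)) w)"
    using length_filter_conv_card[of "\<lambda>x. x = (0::nat)" w] len by simp
  finally show ?thesis .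
qed

theorem corollary23:
  fixes n :: nat and \<pi> :: "nat \<Rightarrow> nat"
  assumes "n \<ge> 2" and "bij_betw \<pi> {0..<n} {0..<n}"
  shows "{w :: nat list. length w = n \<and> set w \<subseteq> {0, 1} \<and>
            num_curves n (state_of_word \<pi> w) = 2}
       = {replicate p 1 @ [0] @ replicate k 1 @ [0] @ replicate (n - p - k - 2) 1 | p k.
            p \<le> n - 2 \<and> k \<le> n - p - 2} \<union> {replicate n 1}"
proof -
  have n0: "0 < n" using assms(1) by simp
  have key: "num_curves n (state_of_word \<pi> w) = 2 \<longleftrightarrow>
      (length (filter (\<lambda>x. x = (0::nat)) w) = 0 \<or> length (filter (\<lambda>x. x = (0::nat)) w) = 2)"
    if len: "length w = n" for w
  proof -
    have fin: "finite (Aset n (state_of_word \<pi> w))" unfolding Aset_def by auto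
    have c: "card (Aset n (state_of_word \<pi> w)) = length (filter (\<lambda>x. x = (0::nat)) w)"
      using card_Aset[OF assms(2) len] .
    have "(Aset n (state_of_word \<pi> w) = {}) = (card (Aset n (state_of_word \<pi> w)) = 0)"
      using fin by simp
    then show ?thesis using num_curves_eq[OF n0, of "state_of_word \<pi> w"] c by auto
  qed
  show ?thesis
  proof (rule set_eqI)
    fix w :: "nat list"
    show "w \<in> {w :: nat list. length w = n \<and> set w \<subseteq> {0, 1} \<and>
            num_curves n (state_of_word \<pi> w) = 2} \<longleftrightarrow>
       w \<in> {replicate p 1 @ [0] @ replicate k 1 @ [0] @ replicate (n - p - k - 2) 1 | p k.
            p \<le> n - 2 \<and> k \<le> n - p - 2} \<union> {replicate n 1}" (is "?L \<longleftrightarrow> ?R")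
    proof
      assume L: ?L
      then have len: "length w = n" and s: "set w \<subseteq> {0, 1}" by auto
      have "length (filter (\<lambda>x. x = (0::nat)) w) = 0 \<or> length (filter (\<lambda>x. x = (0::nat)) w) = 2"
        using L key[OF len] by auto
      then show ?R
      proof
        assume "length (filter (\<lambda>x. x = (0::nat)) w) = 0"
        then have "w = replicate n 1" using cnt0[OF s] len by simp
        then show ?R by simp
      next
        assume "length (filter (\<lambda>x. x = (0::nat)) w) = 2"
        then show ?R using cnt2[OF assms(1), of w] len s by simp
      qed
    next
      assume R: ?R
      show ?L
      proof (cases "w = replicate n 1")
        case True
        have "length w = n" "set w \<subseteq> {0, 1}" using True by auto
        moreover have "length (filter (\<lambda>x. x = (0::nat)) w) = 0"
          using cnt0[OF calculation(2)] True calculation(1) by simp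
        ultimately show ?L using key by simp
      next
        case False
        then have "w \<in> {replicate p 1 @ [0] @ replicate k 1 @ [0] @ replicate (n - p - k - 2) 1 | p k.
            p \<le> n - 2 \<and> k \<le> n - p - 2}" using R by simp
        then have "length w = n \<and> set w \<subseteq> {0, 1} \<and> length (filter (\<lambda>x. x = 0) w) = 2"
          using cnt2[OF assms(1), of w] by simp
        then show ?L using key by simp
      qed
    qed
  qed
qed

end
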